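(* Let $R$ be a ring and $\mathbf x$ a parameter sequence on $R$. Then $\operatorname{ht}(\mathbf x)R\ge\ell(\mathbf x)$.
   Context: All rings are commutative with identity. For $x\in R$ let $C(x)$ be the complex $0\to R\to R_x\to 0$ ($R$ in degree $0$, natural localization map); for $\mathbf x=x_1,\dots,x_\ell$ put $C(\mathbf x)=C(x_1)\otimes_R\cdots\otimes_R C(x_\ell)$ and let $H^i_{\mathbf x}(M)$ be the $i$th cohomology of $C(\mathbf x)\otimes_RM$; $\ell(\mathbf x)=\ell$. Let $K(x)$ be $0\to R\xrightarrow{x}R\to 0$ (degrees $1,0$), $K(\mathbf x)=K(x_1)\otimes\cdots\otimes K(x_\ell)$, $H_i(\mathbf x)$ its homology. For $m\ge n$ the chain map $K(\mathbf x^m)\to K(\mathbf x^n)$ ($\mathbf x^m=x_1^m,\dots,x_\ell^m$) is the tensor product of maps given by multiplication by $x_i^{m-n}$ in degree $1$ and identity in degree $0$. $\mathbf x$ is weakly proregular if for every $n$ there is $m\ge n$ with $H_i(\mathbf x^m)\to H_i(\mathbf x^n)$ zero for all $i\ge1$. $\mathbf x$ is a parameter sequence on $R$ if it is weakly proregular, $(\mathbf x)R\neq R$, and $H^{\ell(\mathbf x)}_{\mathbf x}(R)_p\neq0$ for every prime $p\supseteq(\mathbf x)R$. *)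

theory Defs
  imports Main "HOL-Library.Extended_Nat"
begin

definition is_ideal :: "'a::comm_ring_1 set \<Rightarrow> bool" where
  "is_ideal I \<longleftrightarrow> 0 \<in> I \<and> (\<forall>a\<in>I. \<forall>b\<in>I. a + b \<in> I) \<and> (\<forall>r. \<forall>a\<in>I. r * a \<in> I)"

definition prime_ideal :: "'a::comm_ring_1 set \<Rightarrow> bool" where
  "prime_ideal P \<longleftrightarrow> is_ideal P \<and> P \<noteq> UNIV \<and> (\<forall>a b. a * b \<in> P \<longrightarrow> a \<in> P \<or> b \<in> P)"

definition ideal_gen :: "'a::comm_ring_1 list \<Rightarrow> 'a set" where
  "ideal_gen xs = {(\<Sum>i<length xs. r i * xs ! i) | r. True}"

definition prime_height :: "'a::comm_ring_1 set \<Rightarrow> enat" where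
  "prime_height P = Sup {enat n | n. \<exists>f. (\<forall>i\<le>n. prime_ideal (f i)) \<and>
                                       (\<forall>i<n. f i \<subset> f (Suc i)) \<and> f n = P}"

text \<open>Height of an ideal: infimum of heights of primes containing it (= infinity if none).\<close>
definition ideal_height :: "'a::comm_ring_1 set \<Rightarrow> enat" where
  "ideal_height I = Inf {prime_height P | P. prime_ideal P \<and> I \<subseteq> P}"

text \<open>A chain of K(x) in homological degree i: coefficients c S on the basis vectors
  e_S = e_{j1} \<and> ... \<and> e_{ji}, S \<subseteq> {0..<l}, card S = i (zero elsewhere).\<close>
definition kchain :: "nat \<Rightarrow> nat \<Rightarrow> (nat set \<Rightarrow> 'a::comm_ring_1) \<Rightarrow> bool" where
  "kchain l i c \<longleftrightarrow> (\<forall>S. c S \<noteq> 0 \<longrightarrow> S \<subseteq> {..<l} \<and> card S = i)"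

text \<open>Differential of K(x) = K(x_1) \<otimes> ... \<otimes> K(x_l) (Koszul sign convention):
  d(e_S) = sum over j in S of (-1)^(number of elements of S below j) x_j e_(S - {j}).\<close>
definition kdiff :: "'a::comm_ring_1 list \<Rightarrow> (nat set \<Rightarrow> 'a) \<Rightarrow> nat set \<Rightarrow> 'a" where
  "kdiff xs c T = (if T \<subseteq> {..<length xs} then
      (\<Sum>j\<in>{..<length xs} - T. (-1) ^ card {k\<in>T. k < j} * xs ! j * c (insert j T))
    else 0)"

definition kcycle :: "'a::comm_ring_1 list \<Rightarrow> nat \<Rightarrow> (nat set \<Rightarrow> 'a) \<Rightarrow> bool" where
  "kcycle xs i c \<longleftrightarrow> kchain (length xs) i c \<and> kdiff xs c = (\<lambda>_. 0)"

definition kboundary :: "'a::comm_ring_1 list \<Rightarrow> nat \<Rightarrow> (nat set \<Rightarrow> 'a) \<Rightarrow> bool" where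
  "kboundary xs i c \<longleftrightarrow> (\<exists>b. kchain (length xs) (Suc i) b \<and> c = kdiff xs b)"

definition seq_pow :: "'a::comm_ring_1 list \<Rightarrow> nat \<Rightarrow> 'a list" where
  "seq_pow xs m = map (\<lambda>x. x ^ m) xs"

text \<open>Chain map K(x^m) \<rightarrow> K(x^n): tensor product of (x_i^(m-n) in degree 1, id in degree 0),
  i.e. e_S \<mapsto> (prod of x_j^(m-n), j in S) e_S.\<close>
definition kmap :: "'a::comm_ring_1 list \<Rightarrow> nat \<Rightarrow> nat \<Rightarrow> (nat set \<Rightarrow> 'a) \<Rightarrow> nat set \<Rightarrow> 'a" where
  "kmap xs m n c S = (\<Prod>j\<in>S. (xs ! j) ^ (m - n)) * c S"

definition koszul_hom_map_zero :: "'a::comm_ring_1 list \<Rightarrow> nat \<Rightarrow> nat \<Rightarrow> nat \<Rightarrow> bool" where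
  "koszul_hom_map_zero xs m n i \<longleftrightarrow>
     (\<forall>c. kcycle (seq_pow xs m) i c \<longrightarrow> kboundary (seq_pow xs n) i (kmap xs m n c))"

definition weakly_proregular :: "'a::comm_ring_1 list \<Rightarrow> bool" where
  "weakly_proregular xs \<longleftrightarrow>
     (\<forall>n. \<exists>m\<ge>n. \<forall>i\<ge>1. koszul_hom_map_zero xs m n i)"

text \<open>Fractions a / y^k in R_y, equality in R_y.\<close>
definition loc_eq :: "'a::comm_ring_1 \<Rightarrow> 'a \<times> nat \<Rightarrow> 'a \<times> nat \<Rightarrow> bool" where
  "loc_eq y p q \<longleftrightarrow> (\<exists>n. y ^ n * (fst p * y ^ snd q - fst q * y ^ snd p) = 0)"

text \<open>C(x)^l = R_{x_1} \<otimes> ... \<otimes> R_{x_l} = R_y with y = x_1 ... x_l, and C(x)^(l+1) = 0, so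
  H^l_x(R) = R_y / N where N is the image of the last differential, i.e. the sum of the
  images of the localization maps R_{y/x_i} \<rightarrow> R_y (c / (y/x_i)^M \<mapsto> c x_i^M / y^M).
  A fraction (a,k) represents the zero class iff it lies in N.\<close>
definition cech_top_zero :: "'a::comm_ring_1 list \<Rightarrow> 'a \<times> nat \<Rightarrow> bool" where
  "cech_top_zero xs p \<longleftrightarrow>
     (\<exists>c M. loc_eq (prod_list xs) p ((\<Sum>i<length xs. c i * (xs ! i) ^ M), M))"

text \<open>(H^l_x(R))_P \<noteq> 0: some element h of H^l_x(R) is not killed by any s outside P.\<close>
definition cech_top_localized_nonzero :: "'a::comm_ring_1 list \<Rightarrow> 'a set \<Rightarrow> bool" where
  "cech_top_localized_nonzero xs P \<longleftrightarrow>
     (\<exists>a k. \<forall>s. s \<notin> P \<longrightarrow> \<not> cech_top_zero xs (s * a, k))"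

definition parameter_sequence :: "'a::comm_ring_1 list \<Rightarrow> bool" where
  "parameter_sequence xs \<longleftrightarrow> weakly_proregular xs \<and> ideal_gen xs \<noteq> UNIV \<and>
     (\<forall>P. prime_ideal P \<and> ideal_gen xs \<subseteq> P \<longrightarrow> cech_top_localized_nonzero xs P)"

end

theory Submission
  imports Defs
begin

definition Zt :: "'a::comm_ring_1 list \<Rightarrow> 'a \<Rightarrow> nat \<Rightarrow> nat \<Rightarrow> bool" where
  "Zt xs b k t \<longleftrightarrow> (\<exists>d. b * prod_list xs ^ t = (\<Sum>i<length xs. d i * (xs!i)^(t+k)))"

definition Zc :: "'a::comm_ring_1 list \<Rightarrow> 'a \<Rightarrow> nat \<Rightarrow> bool" where
  "Zc xs b k \<longleftrightarrow> (\<exists>t. Zt xs b k t)"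

lemma Zt_Suc:
  assumes "Zt xs b k t" shows "Zt xs b k (Suc t)"
proof -
  obtain d where d: "b * prod_list xs ^ t = (\<Sum>i<length xs. d i * (xs!i)^(t+k))"
    using assms unfolding Zt_def by blast
  define e where "e i = (SOME e. prod_list xs = xs!i * e)" for i
  have e: "prod_list xs = xs!i * e i" if "i < length xs" for i
  proof -
    have "xs!i dvd prod_list xs" using that by (simp add: prod_list_dvd)
    then obtain f where "prod_list xs = xs!i * f" by (auto elim: dvdE)
    then show ?thesis unfolding e_def by (rule someI)
  qed
  have "b * prod_list xs ^ Suc t = (b * prod_list xs ^ t) * prod_list xs"
    by (simp add: algebra_simps)
  also have "\<dots> = (\<Sum>i<length xs. d i * (xs!i)^(t+k)) * prod_list xs"
    using d by simp
  also have "\<dots> = (\<Sum>i<length xs. d i * (xs!i)^(t+k) * prod_list xs)"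
    by (simp add: sum_distrib_right)
  also have "\<dots> = (\<Sum>i<length xs. (d i * e i) * (xs!i)^(Suc t+k))"
    by (rule sum.cong) (auto simp: e algebra_simps)
  finally show ?thesis unfolding Zt_def by (intro exI[of _ "\<lambda>i. d i * e i"]) simp
qed

lemma Zt_mono: assumes "Zt xs b k t" "t \<le> t'" shows "Zt xs b k t'"
  using assms(2)
proof (induction rule: dec_induct)
  case base
  show ?case using assms(1) .
next
  case (step n)
  show ?case by (rule Zt_Suc[OF step.IH])
qed

lemma Zc_add: "Zc xs a k \<Longrightarrow> Zc xs b k \<Longrightarrow> Zc xs (a + b) k"
proof -
  assume "Zc xs a k" "Zc xs b k"
  then obtain t1 t2 where "Zt xs a k t1" "Zt xs b k t2" unfolding Zc_def by blast
  then have "Zt xs a k (max t1 t2)" "Zt xs b k (max t1 t2)" by (auto intro: Zt_mono)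
  then obtain d1 d2 where
    "a * prod_list xs ^ max t1 t2 = (\<Sum>i<length xs. d1 i * (xs!i)^(max t1 t2+k))"
    "b * prod_list xs ^ max t1 t2 = (\<Sum>i<length xs. d2 i * (xs!i)^(max t1 t2+k))"
    unfolding Zt_def by blast
  then have "(a + b) * prod_list xs ^ max t1 t2 = (\<Sum>i<length xs. (d1 i + d2 i) * (xs!i)^(max t1 t2+k))"
    by (simp add: algebra_simps sum.distrib)
  then show ?thesis unfolding Zc_def Zt_def
    by (intro exI[of _ "max t1 t2"] exI[of _ "\<lambda>i. d1 i + d2 i"]) simp
qed

lemma Zc_mult: "Zc xs a k \<Longrightarrow> Zc xs (r * a) k"
proof -
  assume "Zc xs a k"
  then obtain t d where "a * prod_list xs ^ t = (\<Sum>i<length xs. d i * (xs!i)^(t+k))"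
    unfolding Zc_def Zt_def by blast
  then have "r * (a * prod_list xs ^ t) = (\<Sum>i<length xs. (r * d i) * (xs!i)^(t+k))"
    by (simp add: sum_distrib_left mult.assoc)
  then have "(r * a) * prod_list xs ^ t = (\<Sum>i<length xs. (r * d i) * (xs!i)^(t+k))"
    by (simp add: mult.assoc)
  then show ?thesis unfolding Zc_def Zt_def by (intro exI[of _ t] exI[of _ "\<lambda>i. r * d i"]) simp
qed

lemma Zc_zero: "Zc xs 0 k"
  unfolding Zc_def Zt_def by (rule exI[of _ 0], rule exI[of _ "\<lambda>_. 0"]) simp

lemma Zc_cons: assumes "Zc xs (z ^ j * a) k" shows "Zc (z # xs) a k"
proof -
  obtain t0 where "Zt xs (z ^ j * a) k t0" using assms unfolding Zc_def by blast
  then have "Zt xs (z ^ j * a) k (max t0 j)" by (auto intro: Zt_mono)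
  then obtain d where d: "(z ^ j * a) * prod_list xs ^ (max t0 j) = (\<Sum>i<length xs. d i * (xs!i)^(max t0 j+k))"
    unfolding Zt_def by blast
  define t where "t = max t0 j"
  have tj: "t = (t - j) + j" unfolding t_def by simp
  define d' where "d' i = (if i = 0 then 0 else z ^ (t - j) * d (i - 1))" for i
  have zt: "z ^ t = z^(t-j) * z^j" using tj by (metis power_add)
  have "a * prod_list (z # xs) ^ t = z ^ (t - j) * ((z ^ j * a) * prod_list xs ^ t)"
    by (simp only: prod_list.Cons power_mult_distrib zt) (simp add: ac_simps)
  also have "\<dots> = (\<Sum>i<length xs. z ^ (t - j) * d i * (xs!i)^(t+k))"
    using d unfolding t_def by (simp add: sum_distrib_left algebra_simps)
  also have "\<dots> = (\<Sum>i<length (z # xs). d' i * ((z # xs)!i)^(t+k))"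
    by (simp add: sum.lessThan_Suc_shift d'_def del: sum.lessThan_Suc)
  finally show ?thesis unfolding Zc_def Zt_def by blast
qed

lemma Zc_cons_pow: "Zc (z # xs) (z ^ k * a) k"
proof -
  define d where "d i = (if i = 0 then a else 0)" for i :: nat
  have "(z ^ k * a) * prod_list (z # xs) ^ 0 = (\<Sum>i<length (z # xs). d i * ((z # xs)!i)^(0+k))"
    by (simp add: sum.lessThan_Suc_shift d_def del: sum.lessThan_Suc)
  then show ?thesis unfolding Zc_def Zt_def by blast
qed

lemma Zc_cech: assumes "Zc xs b k" shows "cech_top_zero xs (b, k)"
proof -
  obtain t d where d: "b * prod_list xs ^ t = (\<Sum>i<length xs. d i * (xs!i)^(t+k))"
    using assms unfolding Zc_def Zt_def by blast
  have e: "b * prod_list xs ^ (t + k) = (b * prod_list xs ^ t) * prod_list xs ^ k"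
    by (simp add: power_add ac_simps)
  have "prod_list xs ^ 0 * (b * prod_list xs ^ (t + k) - (\<Sum>i<length xs. d i * (xs!i)^(t+k)) * prod_list xs ^ k) = 0"
    unfolding e d by simp
  then show ?thesis unfolding cech_top_zero_def loc_eq_def
    by (intro exI[of _ d] exI[of _ "t+k"] exI[of _ 0]) simp
qed

lemma ideal_add_mult:
  assumes "is_ideal Q"
  shows "is_ideal {q + r * a | q r. q \<in> Q}"
proof -
  have z: "0 \<in> Q" and ad: "\<And>x y. x \<in> Q \<Longrightarrow> y \<in> Q \<Longrightarrow> x + y \<in> Q"
    and mu: "\<And>c x. x \<in> Q \<Longrightarrow> c * x \<in> Q"
    using assms unfolding is_ideal_def by auto
  show ?thesis unfolding is_ideal_def
  proof (intro conjI ballI allI)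
    show "0 \<in> {q + r * a | q r. q \<in> Q}" using z by (intro CollectI exI[of _ 0] exI[of _ 0]) simp
  next
    fix x y assume "x \<in> {q + r * a | q r. q \<in> Q}" "y \<in> {q + r * a | q r. q \<in> Q}"
    then obtain q1 r1 q2 r2 where "x = q1 + r1 * a" "q1 \<in> Q" "y = q2 + r2 * a" "q2 \<in> Q" by blast
    then show "x + y \<in> {q + r * a | q r. q \<in> Q}"
      by (intro CollectI exI[of _ "q1 + q2"] exI[of _ "r1 + r2"]) (simp add: ad algebra_simps)
  next
    fix c x assume "x \<in> {q + r * a | q r. q \<in> Q}"
    then obtain q1 r1 where "x = q1 + r1 * a" "q1 \<in> Q" by blast
    then show "c * x \<in> {q + r * a | q r. q \<in> Q}"
      by (intro CollectI exI[of _ "c * q1"] exI[of _ "c * r1"]) (simp add: mu algebra_simps)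
  qed
qed

lemma exists_prime_disjoint:
  fixes W U :: "'a::comm_ring_1 set"
  assumes W: "is_ideal W" and disj: "W \<inter> U = {}" and one: "1 \<in> U"
    and mult: "\<And>u v. u \<in> U \<Longrightarrow> v \<in> U \<Longrightarrow> u * v \<in> U"
  shows "\<exists>Q. prime_ideal Q \<and> W \<subseteq> Q \<and> Q \<inter> U = {}"
proof -
  define A where "A = {I. is_ideal I \<and> W \<subseteq> I \<and> I \<inter> U = {}}"
  have "\<forall>C\<in>chains A. \<exists>V\<in>A. \<forall>X\<in>C. X \<subseteq> V"
  proof
    fix C assume C: "C \<in> chains A"
    show "\<exists>V\<in>A. \<forall>X\<in>C. X \<subseteq> V"
    proof (cases "C = {}")
      case True then show ?thesis using W disj unfolding A_def by auto
    next
      case False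
      have CA: "C \<subseteq> A" using C by (rule chainsD2)
      have "is_ideal (\<Union>C)" unfolding is_ideal_def
      proof (intro conjI ballI allI)
        obtain I where "I \<in> C" using False by blast
        then show "0 \<in> \<Union>C" using CA unfolding A_def is_ideal_def by auto
      next
        fix a b assume "a \<in> \<Union>C" "b \<in> \<Union>C"
        then obtain I J where IJ: "I \<in> C" "J \<in> C" "a \<in> I" "b \<in> J" by blast
        from chainsD[OF C IJ(1,2)] show "a + b \<in> \<Union>C"
        proof
          assume "I \<subseteq> J" then show ?thesis using IJ CA unfolding A_def is_ideal_def by blast
        next
          assume "J \<subseteq> I" then show ?thesis using IJ CA unfolding A_def is_ideal_def by blast
        qed
      next
        fix r a assume "a \<in> \<Union>C"
        then show "r * a \<in> \<Union>C" using CA unfolding A_def is_ideal_def by blast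
      qed
      moreover have "W \<subseteq> \<Union>C" using False CA unfolding A_def by blast
      moreover have "\<Union>C \<inter> U = {}" using CA unfolding A_def by blast
      ultimately show ?thesis unfolding A_def by blast
    qed
  qed
  from Zorn_Lemma2[OF this] obtain Q where QA: "Q \<in> A" and max: "\<forall>X\<in>A. Q \<subseteq> X \<longrightarrow> X = Q"
    by blast
  have Qi: "is_ideal Q" and WQ: "W \<subseteq> Q" and QU: "Q \<inter> U = {}" using QA unfolding A_def by auto
  have ext: "\<exists>q r. q \<in> Q \<and> q + r * a \<in> U" if "a \<notin> Q" for a
  proof (rule ccontr)
    assume nex: "\<not> ?thesis"
    let ?X = "{q + r * a | q r. q \<in> Q}"
    have "?X \<in> A" unfolding A_def using ideal_add_mult[OF Qi] nex WQ
    proof -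
      have "Q \<subseteq> ?X" by (force intro: exI[of _ 0])
      then show "?X \<in> {I. is_ideal I \<and> W \<subseteq> I \<and> I \<inter> U = {}}"
        using ideal_add_mult[OF Qi] nex WQ by blast
    qed
    moreover have "Q \<subseteq> ?X" by (force intro: exI[of _ 0])
    moreover have "a \<in> ?X" using Qi unfolding is_ideal_def
      by (intro CollectI exI[of _ 0] exI[of _ 1]) simp
    ultimately show False using max that by blast
  qed
  have "prime_ideal Q" unfolding prime_ideal_def
  proof (intro conjI allI impI)
    show "is_ideal Q" by (rule Qi)
    show "Q \<noteq> UNIV" using QU one by blast
  next
    fix a b assume ab: "a * b \<in> Q"
    show "a \<in> Q \<or> b \<in> Q"
    proof (rule ccontr)
      assume "\<not> (a \<in> Q \<or> b \<in> Q)"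
      then obtain q1 r1 q2 r2 where h: "q1 \<in> Q" "q1 + r1 * a \<in> U" "q2 \<in> Q" "q2 + r2 * b \<in> U"
        using ext by meson
      have "(q1 + r1 * a) * (q2 + r2 * b) \<in> U" using mult h by blast
      moreover have "(q1 + r1 * a) * (q2 + r2 * b) = (q1 + r1 * a) * q2 + (q1 * (r2 * b) + (r1 * r2) * (a * b))"
        by (simp add: algebra_simps)
      moreover have "\<dots> \<in> Q" using Qi h ab unfolding is_ideal_def by (metis mult.commute)
      ultimately show False using QU by auto
    qed
  qed
  then show ?thesis using WQ QU by blast
qed

lemma height_less:
  assumes Q: "prime_ideal Q" and QP: "Q \<subset> P" and P: "prime_ideal P"
    and h: "prime_height P < enat (Suc l)"
  shows "prime_height Q < enat l"
proof -
  have ext: "enat (Suc n) \<le> prime_height P"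
    if "\<forall>i\<le>n. prime_ideal (f i)" "\<forall>i<n. f i \<subset> f (Suc i)" "f n = Q" for n f
  proof -
    define g where "g i = (if i \<le> n then f i else P)" for i
    have "\<forall>i\<le>Suc n. prime_ideal (g i)" using that P unfolding g_def by auto
    moreover have "\<forall>i<Suc n. g i \<subset> g (Suc i)"
    proof (intro allI impI)
      fix i assume "i < Suc n"
      then consider "i < n" | "i = n" by linarith
      then show "g i \<subset> g (Suc i)"
      proof cases
        case 1 then show ?thesis using that(2) by (simp add: g_def)
      next
        case 2 then show ?thesis using that(3) QP by (simp add: g_def)
      qed
    qed
    moreover have "g (Suc n) = P" unfolding g_def by simp
    ultimately have "enat (Suc n) \<in> {enat n | n. \<exists>f. (\<forall>i\<le>n. prime_ideal (f i)) \<and>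
                                       (\<forall>i<n. f i \<subset> f (Suc i)) \<and> f n = P}"
      by blast
    then show ?thesis unfolding prime_height_def by (rule Sup_upper)
  qed
  have "enat (Suc 0) \<le> prime_height P" using ext[of 0 "\<lambda>_. Q"] Q by auto
  then have "enat (Suc 0) < enat (Suc l)" using h by (rule le_less_trans)
  then have l1: "1 \<le> l" by simp
  have "prime_height Q \<le> enat (l - 1)" unfolding prime_height_def
  proof (rule Sup_least)
    fix x assume "x \<in> {enat n | n. \<exists>f. (\<forall>i\<le>n. prime_ideal (f i)) \<and> (\<forall>i<n. f i \<subset> f (Suc i)) \<and> f n = Q}"
    then obtain n f where "x = enat n" "\<forall>i\<le>n. prime_ideal (f i)" "\<forall>i<n. f i \<subset> f (Suc i)" "f n = Q"
      by blast
    then have "enat (Suc n) \<le> prime_height P" "x = enat n" using ext by auto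
    then have "enat (Suc n) < enat (Suc l)" "x = enat n" using h le_less_trans by blast+
    then show "x \<le> enat (l - 1)" using l1 by auto
  qed
  also have "\<dots> < enat l" using l1 by simp
  finally show ?thesis .
qed

lemma one_notin: "prime_ideal P \<Longrightarrow> (1::'a::comm_ring_1) \<notin> P"
  unfolding prime_ideal_def is_ideal_def by (metis UNIV_eq_I mult.right_neutral)

lemma pow_notin: assumes "prime_ideal P" "z \<notin> P" shows "(z::'a::comm_ring_1) ^ k \<notin> P"
proof (induction k)
  case 0 then show ?case using one_notin[OF assms(1)] by simp
next
  case (Suc k) then show ?case using assms unfolding prime_ideal_def by auto
qed

lemma main:
  fixes xs :: "'a::comm_ring_1 list"
  shows "prime_ideal P \<Longrightarrow> prime_height P < enat (length xs) \<Longrightarrow> \<exists>s. s \<notin> P \<and> Zc xs (s * a) k"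
proof (induction xs arbitrary: P)
  case Nil
  then show ?case by (simp add: zero_enat_def[symmetric])
next
  case (Cons z xs)
  have P: "prime_ideal P" by (rule Cons.prems(1))
  have Pi: "is_ideal P" and Pm: "\<And>a b. a * b \<in> P \<Longrightarrow> a \<in> P \<or> b \<in> P"
    using P unfolding prime_ideal_def by auto
  show ?case
  proof (cases "z \<in> P")
    case False
    then show ?thesis using pow_notin[OF P False, of k] Zc_cons_pow[of z xs k a] by blast
  next
    case zP: True
    show ?thesis
    proof (rule ccontr)
      assume nS: "\<not> ?thesis"
      define W where "W = {r. \<exists>j. Zc xs (z ^ j * (r * a)) k}"
      have WP: "W \<subseteq> P"
      proof
        fix r assume "r \<in> W"
        then obtain j where "Zc xs (z ^ j * (r * a)) k" unfolding W_def by blast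
        then have "Zc (z # xs) (r * a) k" by (rule Zc_cons)
        then show "r \<in> P" using nS by blast
      qed
      have Wi: "is_ideal W" unfolding is_ideal_def
      proof (intro conjI ballI allI)
        show "0 \<in> W" unfolding W_def using Zc_zero[of xs k] by simp
      next
        fix r1 r2 assume "r1 \<in> W" "r2 \<in> W"
        then obtain j1 j2 where j: "Zc xs (z ^ j1 * (r1 * a)) k" "Zc xs (z ^ j2 * (r2 * a)) k"
          unfolding W_def by blast
        have "Zc xs (z ^ j2 * (z ^ j1 * (r1 * a)) + z ^ j1 * (z ^ j2 * (r2 * a))) k"
          using j by (intro Zc_add) (rule Zc_mult, assumption)+
        moreover have "z ^ j2 * (z ^ j1 * (r1 * a)) + z ^ j1 * (z ^ j2 * (r2 * a))
             = z ^ (j1 + j2) * ((r1 + r2) * a)"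
          by (simp add: power_add algebra_simps)
        ultimately show "r1 + r2 \<in> W" unfolding W_def by auto
      next
        fix c r assume "r \<in> W"
        then obtain j where "Zc xs (z ^ j * (r * a)) k" unfolding W_def by blast
        then have "Zc xs (c * (z ^ j * (r * a))) k" by (rule Zc_mult)
        moreover have "c * (z ^ j * (r * a)) = z ^ j * ((c * r) * a)" by (simp add: algebra_simps)
        ultimately show "c * r \<in> W" unfolding W_def by auto
      qed
      define U where "U = {u * z ^ j | u j. u \<notin> P}"
      have one: "1 \<in> U" unfolding U_def using one_notin[OF P]
        by (intro CollectI exI[of _ 1] exI[of _ 0]) simp
      have mult: "u * v \<in> U" if uv: "u \<in> U" "v \<in> U" for u v
      proof -
        obtain u1 j1 v1 j2 where h: "u = u1 * z ^ j1" "u1 \<notin> P" "v = v1 * z ^ j2" "v1 \<notin> P"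
          using uv unfolding U_def by blast
        have "u1 * v1 \<notin> P" using h Pm by blast
        moreover have "u * v = (u1 * v1) * z ^ (j1 + j2)" using h by (simp add: power_add algebra_simps)
        ultimately show ?thesis unfolding U_def by blast
      qed
      have disj: "W \<inter> U = {}"
      proof (rule ccontr)
        assume "W \<inter> U \<noteq> {}"
        then obtain u j where uj: "u * z ^ j \<in> W" "u \<notin> P" unfolding U_def by blast
        then obtain i where "Zc xs (z ^ i * ((u * z ^ j) * a)) k" unfolding W_def by blast
        moreover have "z ^ i * ((u * z ^ j) * a) = z ^ (i + j) * (u * a)"
          by (simp add: power_add algebra_simps)
        ultimately have "u \<in> W" unfolding W_def by auto
        then show False using WP uj by blast
      qed
      obtain Q where Q: "prime_ideal Q" "W \<subseteq> Q" "Q \<inter> U = {}"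
        using exists_prime_disjoint[OF Wi disj one mult] by blast
      have QP: "Q \<subseteq> P"
      proof
        fix q assume "q \<in> Q"
        moreover have "q \<notin> P \<Longrightarrow> q \<in> U" unfolding U_def
          by (intro CollectI exI[of _ q] exI[of _ 0]) simp
        ultimately show "q \<in> P" using Q(3) by blast
      qed
      have "z \<in> U" unfolding U_def using one_notin[OF P]
        by (intro CollectI exI[of _ 1] exI[of _ 1]) simp
      then have "z \<notin> Q" using Q(3) by blast
      then have "Q \<subset> P" using QP zP by blast
      then have "prime_height Q < enat (length xs)"
        using height_less[OF Q(1) _ P] Cons.prems(2) by simp
      then obtain s where s: "s \<notin> Q" "Zc xs (s * a) k" using Cons.IH[OF Q(1)] by blast
      then have "s \<in> W" unfolding W_def by (intro CollectI exI[of _ 0]) simp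
      then show False using s Q(2) by blast
    qed
  qed
qed

theorem proposition3p5:
  fixes xs :: "'a::comm_ring_1 list"
  assumes "parameter_sequence xs"
  shows "ideal_height (ideal_gen xs) \<ge> enat (length xs)"
  unfolding ideal_height_def
proof (rule Inf_greatest)
  fix x assume "x \<in> {prime_height P |P. prime_ideal P \<and> ideal_gen xs \<subseteq> P}"
  then obtain P where P: "x = prime_height P" "prime_ideal P" "ideal_gen xs \<subseteq> P" by blast
  show "enat (length xs) \<le> x"
  proof (rule ccontr)
    assume "\<not> enat (length xs) \<le> x"
    then have lt: "prime_height P < enat (length xs)" using P(1) by (simp add: not_le)
    have "cech_top_localized_nonzero xs P" using assms P unfolding parameter_sequence_def by blast
    then obtain a k where ak: "\<forall>s. s \<notin> P \<longrightarrow> \<not> cech_top_zero xs (s * a, k)"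
      unfolding cech_top_localized_nonzero_def by blast
    obtain s where "s \<notin> P" "Zc xs (s * a) k" using main[OF P(2) lt] by blast
    then show False using ak Zc_cech by blast
  qed
qed

end
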